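(* If $Q$ is a saturated cover on a finite modular lattice $M$, then $\langle Q\rangle$ is a saturated transfer system on $M$.
   Context: A lattice $M$ is modular if $a\le b$ implies $a\vee(x\wedge b)=(a\vee x)\wedge b$. A transfer system on a finite lattice $(P,\le)$ is a partial order $R$ refining $\le$ closed under restriction: $x\,R\,z$ and $y\le z$ imply $(x\wedge y)\,R\,y$; it is saturated if $x\,R\,y$, $y\le z$ and $x\,R\,z$ imply $y\,R\,z$. For a set $Q$ of pairs $(x,y)$ with $x\le y$, $\langle Q\rangle$ is the intersection of all transfer systems containing $Q$. A covering diamond is a quadruple $x,y,x\wedge y,x\vee y$ with $x\ne y$ such that $x\vee y$ covers $x$ and $y$ and both cover $x\wedge y$. A saturated cover on $M$ is a set $Q$ of covering relations of $M$ such that (1) for all $x,y$, if $x\,Q\,(x\vee y)$ then $(x\wedge y)\,Q\,y$; (2) for every covering diamond, if three of its four covering relations lie in $Q$, so does the fourth. *)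

theory Defs
  imports Main
begin

definition modular_lattice :: "('a::lattice) itself \<Rightarrow> bool" where
  "modular_lattice _ \<longleftrightarrow> (\<forall>a b x::'a. a \<le> b \<longrightarrow> sup a (inf x b) = inf (sup a x) b)"

definition transfer_system :: "('a::lattice) rel \<Rightarrow> bool" where
  "transfer_system R \<longleftrightarrow>
     (\<forall>x. (x, x) \<in> R) \<and>
     antisym R \<and> trans R \<and>
     (\<forall>x y. (x, y) \<in> R \<longrightarrow> x \<le> y) \<and>
     (\<forall>x y z. (x, z) \<in> R \<and> y \<le> z \<longrightarrow> (inf x y, y) \<in> R)"

definition saturated :: "('a::lattice) rel \<Rightarrow> bool" where
  "saturated R \<longleftrightarrow> (\<forall>x y z. (x, y) \<in> R \<and> y \<le> z \<and> (x, z) \<in> R \<longrightarrow> (y, z) \<in> R)"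

definition generated_transfer :: "('a::lattice) rel \<Rightarrow> 'a rel" where
  "generated_transfer Q = \<Inter> {R. transfer_system R \<and> Q \<subseteq> R}"

definition covers :: "'a::order \<Rightarrow> 'a \<Rightarrow> bool" where
  "covers x y \<longleftrightarrow> x < y \<and> \<not> (\<exists>z. x < z \<and> z < y)"

definition covering_diamond :: "'a::lattice \<Rightarrow> 'a \<Rightarrow> bool" where
  "covering_diamond x y \<longleftrightarrow> x \<noteq> y \<and> covers x (sup x y) \<and> covers y (sup x y) \<and>
     covers (inf x y) x \<and> covers (inf x y) y"

definition saturated_cover :: "('a::lattice) rel \<Rightarrow> bool" where
  "saturated_cover Q \<longleftrightarrow>
     (\<forall>x y. (x, y) \<in> Q \<longrightarrow> covers x y) \<and>
     (\<forall>x y. (x, sup x y) \<in> Q \<longrightarrow> (inf x y, y) \<in> Q) \<and>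
     (\<forall>x y. covering_diamond x y \<longrightarrow>
        card ({(inf x y, x), (inf x y, y), (x, sup x y), (y, sup x y)} \<inter> Q) \<ge> 3 \<longrightarrow>
        {(inf x y, x), (inf x y, y), (x, sup x y), (y, sup x y)} \<subseteq> Q)"

end

theory Submission
  imports Defs
begin

lemma Q_lt:
  assumes "saturated_cover Q" "(x,y) \<in> Q" shows "x < y"
  using assms unfolding saturated_cover_def covers_def by blast

lemma rt_le:
  assumes "saturated_cover (Q::('a::lattice) rel)" "(x,y) \<in> Q\<^sup>*" shows "x \<le> y"
  using assms(2)
proof (induction rule: rtrancl_induct)
  case base then show ?case by simp
next
  case (step y z) then show ?case using Q_lt[OF assms(1) step(2)] by simp
qed

lemma cover_sup:
  assumes "covers a (b::'a::lattice)" "y \<le> b" "\<not> y \<le> a" shows "sup a y = b"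
proof -
  have "a \<le> sup a y" "sup a y \<le> b" using assms by (auto simp: covers_def)
  moreover have "sup a y \<noteq> a" using assms(3) by (metis sup.cobounded2)
  ultimately show ?thesis using assms(1) unfolding covers_def
    by (metis order.not_eq_order_implies_strict)
qed

lemma step_restrict:
  assumes sc: "saturated_cover (Q::('a::lattice) rel)" and "(w,z) \<in> Q" "y \<le> z"
  shows "(inf w y, y) \<in> Q\<^sup>*"
proof (cases "y \<le> w")
  case True then show ?thesis by (simp add: inf_absorb2)
next
  case False
  have "covers w z" using sc assms(2) unfolding saturated_cover_def by blast
  then have "sup w y = z" using cover_sup False assms(3) by blast
  then have "(inf w y, y) \<in> Q" using sc assms(2) unfolding saturated_cover_def by metis
  then show ?thesis by blast
qed

lemma rt_restrict:
  assumes sc: "saturated_cover (Q::('a::lattice) rel)" and "(x,z) \<in> Q\<^sup>*"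
  shows "\<And>y. y \<le> z \<Longrightarrow> (inf x y, y) \<in> Q\<^sup>*"
  using assms(2)
proof (induction rule: rtrancl_induct)
  case base then show ?case by (simp add: inf_absorb2)
next
  case (step w z y)
  have 1: "(inf w y, y) \<in> Q\<^sup>*" using step_restrict[OF sc step(2) step(4)] .
  have "(inf x (inf w y), inf w y) \<in> Q\<^sup>*" using step(3) by simp
  moreover have "x \<le> w" using rt_le[OF sc step(1)] .
  then have "inf x (inf w y) = inf x y" by (metis inf.absorb1 inf.assoc)
  ultimately show ?case using 1 by simp
qed

lemma upper_cover:
  assumes mod: "modular_lattice TYPE('a::lattice)"
    and "covers a (b::'a)" "covers a c" "b \<noteq> c"
  shows "covers b (sup b c)"
proof -
  have nb: "\<not> c \<le> b"
  proof
    assume "c \<le> b"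
    then show False using assms unfolding covers_def by (metis order.not_eq_order_implies_strict)
  qed
  have "b < sup b c" using nb by (metis le_sup_iff order.not_eq_order_implies_strict sup_ge1)
  moreover have "\<not> (\<exists>w. b < w \<and> w < sup b c)"
  proof
    assume "\<exists>w. b < w \<and> w < sup b c"
    then obtain w where w: "b < w" "w < sup b c" by blast
    have m: "sup b (inf c w) = inf (sup b c) w" using mod w(1) unfolding modular_lattice_def by auto
    also have "\<dots> = w" using w(2) by (simp add: inf_absorb2)
    finally have m2: "sup b (inf c w) = w" .
    have "a \<le> inf c w" using assms(2,3) w(1) unfolding covers_def by auto
    moreover have "inf c w \<le> c" by simp
    ultimately have "inf c w = a \<or> inf c w = c" using assms(3) unfolding covers_def
      by (metis order.not_eq_order_implies_strict)
    then show False
    proof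
      assume "inf c w = a"
      then have "sup b a = w" using m2 by simp
      moreover have "a \<le> b" using assms(2) unfolding covers_def by auto
      ultimately show False using w(1) by (simp add: sup_absorb1)
    next
      assume "inf c w = c"
      then have "c \<le> w" by (metis inf.orderI)
      then have "sup b c \<le> w" using w(1) by simp
      then show False using w(2) by (simp add: leD)
    qed
  qed
  ultimately show ?thesis unfolding covers_def by blast
qed

lemma lemA:
  assumes mod: "modular_lattice TYPE('a::lattice)" and sc: "saturated_cover (Q::'a rel)"
    and "(a,z) \<in> Q\<^sup>*"
  shows "\<And>b. (a,b) \<in> Q \<Longrightarrow> b \<le> z \<Longrightarrow> (b,z) \<in> Q\<^sup>*"
  using assms(3)
proof (induction rule: converse_rtrancl_induct)
  case base
  then show ?case using Q_lt[OF sc base(1)] by simp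
next
  case (step a c b)
  show ?case
  proof (cases "b = c")
    case True then show ?thesis using step by simp
  next
    case False
    have cab: "covers a b" "covers a c" using sc step unfolding saturated_cover_def by blast+
    have cz: "c \<le> z" using rt_le[OF sc step(2)] .
    have cb: "covers b (sup b c)" using upper_cover[OF mod cab False] .
    have cc: "covers c (sup b c)" using upper_cover[OF mod cab(2,1)] False by (simp add: sup_commute)
    have ia: "inf b c = a"
    proof -
      have "a \<le> inf b c" using cab unfolding covers_def by auto
      moreover have "inf b c \<le> b" by simp
      moreover have "inf b c \<noteq> b"
      proof
        assume "inf b c = b" then have "b \<le> c" by (metis inf.orderI)
        then show False using cab False unfolding covers_def by (metis order.not_eq_order_implies_strict)
      qed
      ultimately show ?thesis using cab(1) unfolding covers_def
        by (metis order.not_eq_order_implies_strict)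
    qed
    have bcz: "sup b c \<le> z" using cz step(5) by simp
    have "(inf c (sup b c), sup b c) \<in> Q\<^sup>*" using rt_restrict[OF sc step(2) bcz] .
    then have "(c, sup b c) \<in> Q\<^sup>*" by (simp add: inf_absorb1)
    then have cQ: "(c, sup b c) \<in> Q"
    proof (cases rule: converse_rtranclE)
      case base then show ?thesis using cc unfolding covers_def by simp
    next
      case (step w)
      have "c < w" using Q_lt[OF sc step(1)] .
      moreover have "w \<le> sup b c" using rt_le[OF sc step(2)] .
      ultimately have "w = sup b c" using cc unfolding covers_def
        by (metis order.not_eq_order_implies_strict)
      then show ?thesis using step by simp
    qed
    have cd: "covering_diamond b c"
      unfolding covering_diamond_def using False cb cc cab ia by simp
    define S where "S = {(inf b c, b), (inf b c, c), (b, sup b c), (c, sup b c)}"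
    have "{(a,b),(a,c),(c, sup b c)} \<subseteq> S \<inter> Q" using ia cQ step(1,4) unfolding S_def by auto
    moreover have "card {(a,b),(a,c),(c, sup b c)} = 3"
    proof -
      have "a \<noteq> c" using Q_lt[OF sc step(1)] by simp
      then show ?thesis using False by simp
    qed
    moreover have "finite (S \<inter> Q)" unfolding S_def by simp
    ultimately have "card (S \<inter> Q) \<ge> 3" by (metis card_mono)
    then have "S \<subseteq> Q" using sc cd unfolding saturated_cover_def S_def by blast
    then have bQ: "(b, sup b c) \<in> Q" unfolding S_def by simp
    have "(sup b c, z) \<in> Q\<^sup>*" using step(3)[OF cQ bcz] .
    then show ?thesis using bQ by (meson converse_rtrancl_into_rtrancl)
  qed
qed

lemma gen_eq:
  assumes sc: "saturated_cover (Q::('a::lattice) rel)"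
  shows "generated_transfer Q = Q\<^sup>*"
proof -
  have ts: "transfer_system (Q\<^sup>*)"
    unfolding transfer_system_def
  proof (intro conjI allI impI)
    show "antisym (Q\<^sup>*)" 
    proof (rule antisymI)
      fix x y assume "(x,y) \<in> Q\<^sup>*" "(y,x) \<in> Q\<^sup>*"
      then show "x = y" using rt_le[OF sc] order.antisym by metis
    qed
    show "trans (Q\<^sup>*)" by (rule trans_rtrancl)
    show "\<And>x. (x,x) \<in> Q\<^sup>*" by simp
    show "\<And>x y. (x,y) \<in> Q\<^sup>* \<Longrightarrow> x \<le> y" by (rule rt_le[OF sc])
    show "\<And>x y z. (x, z) \<in> Q\<^sup>* \<and> y \<le> z \<Longrightarrow> (inf x y, y) \<in> Q\<^sup>*"
      using rt_restrict[OF sc] by blast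
  qed
  have "\<And>R. transfer_system R \<Longrightarrow> Q \<subseteq> R \<Longrightarrow> Q\<^sup>* \<subseteq> R"
  proof
    fix R p assume R: "transfer_system R" "Q \<subseteq> R" and p: "p \<in> Q\<^sup>*"
    obtain x y where xy: "p = (x,y)" by (cases p)
    have "(x,y) \<in> Q\<^sup>*" using p xy by simp
    then have "(x,y) \<in> R"
    proof (induction rule: rtrancl_induct)
      case base then show ?case using R(1) unfolding transfer_system_def by simp
    next
      case (step y z)
      have "trans R" using R(1) unfolding transfer_system_def by simp
      moreover have "(y,z) \<in> R" using step(2) R(2) by blast
      ultimately show ?case using step(3) by (blast dest: transD)
    qed
    then show "p \<in> R" using xy by simp
  qed
  then have "Q\<^sup>* \<subseteq> \<Inter> {R. transfer_system R \<and> Q \<subseteq> R}" by (intro Inter_greatest) blast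
  moreover have "\<Inter> {R. transfer_system R \<and> Q \<subseteq> R} \<subseteq> Q\<^sup>*"
    by (rule Inter_lower) (use ts in blast)
  ultimately show ?thesis unfolding generated_transfer_def by (rule equalityI[rotated])
qed

theorem proposition3p11:
  fixes Q :: "('a::{finite, lattice}) rel"
  assumes "modular_lattice TYPE('a)"
    and "saturated_cover Q"
  shows "transfer_system (generated_transfer Q) \<and> saturated (generated_transfer Q)"
proof -
  have ts: "transfer_system (Q\<^sup>*)"
    unfolding transfer_system_def
  proof (intro conjI allI impI)
    show "antisym (Q\<^sup>*)" 
    proof (rule antisymI)
      fix x y assume "(x,y) \<in> Q\<^sup>*" "(y,x) \<in> Q\<^sup>*"
      then show "x = y" using rt_le[OF assms(2)] order.antisym by metis
    qed
    show "trans (Q\<^sup>*)" by (rule trans_rtrancl)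
    show "\<And>x. (x,x) \<in> Q\<^sup>*" by simp
    show "\<And>x y. (x,y) \<in> Q\<^sup>* \<Longrightarrow> x \<le> y" by (rule rt_le[OF assms(2)])
    show "\<And>x y z. (x, z) \<in> Q\<^sup>* \<and> y \<le> z \<Longrightarrow> (inf x y, y) \<in> Q\<^sup>*"
      using rt_restrict[OF assms(2)] by blast
  qed
  have sat: "saturated (Q\<^sup>*)"
    unfolding saturated_def
  proof (intro allI impI, elim conjE)
    fix x y z assume xy: "(x,y) \<in> Q\<^sup>*" and yz: "y \<le> z" and xz: "(x,z) \<in> Q\<^sup>*"
    from xy xz show "(y,z) \<in> Q\<^sup>*"
    proof (induction rule: converse_rtrancl_induct)
      case base then show ?case by simp
    next
      case (step x x1)
      have "x1 \<le> y" using rt_le[OF assms(2) step(2)] .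
      then have "(x1,z) \<in> Q\<^sup>*" using lemA[OF assms step(4) step(1)] yz by simp
      then show ?case using step(3) by simp
    qed
  qed
  show ?thesis using gen_eq[OF assms(2)] ts sat by simp
qed

end
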